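(* Let $X$ be the real harmonizable multifractional stable process and $T>0$. There exist $\delta,C_1,C_2>0$ such that for all $t,s\in[0,T]$ with $|t-s|<\delta$, $$C_1|t-s|^{\hat H(t,s)}\le\|X(t)-X(s)\|_\alpha\le C_2|t-s|^{\check H(t,s)},$$ where $\hat H(t,s)=\min_{u\in[s\wedge t,s\vee t]}H(u)$ and $\check H(t,s)=\max_{u\in[s\wedge t,s\vee t]}H(u)$.
   Context: Fix $\alpha\in(1,2)$. $M$ is an independently scattered rotationally invariant complex S$\alpha$S random measure on $\mathbb R$ with Lebesgue control measure: for every Borel $A$ and $\theta\in\mathbb R$, $e^{i\theta}M(A)\overset{d}{=}M(A)$, $\mathbb E e^{iu\,\mathrm{Re} M(A)}=e^{-\lambda(A)|u|^\alpha}$; values on disjoint Borel subsets of $[0,\infty)$ are independent; $M(-A)=\overline{M(A)}$. For $f$ with $f(-x)=\overline{f(x)}$, $f\in L^\alpha(\mathbb R)$, $\int f\,dM$ is real S$\alpha$S with $\mathbb E\exp(iu\int f dM)=\exp(-|u|^\alpha\|f\|^\alpha_{L^\alpha})$; $\|\xi\|_\alpha^\alpha:=-\log\mathbb Ee^{i\xi}$, so $\|\int f dM\|_\alpha=\|f\|_{L^\alpha}$. The Hurst function $H:[0,\infty)\to\mathbb R$ satisfies $0<\hat H:=\inf_t H(t)\le\sup_tH(t)=:\check H<1$, and there are $C>0$ and $\gamma>\check H$ with $|H(t)-H(s)|\le C|t-s|^\gamma$ for all $t,s\ge0$. The real harmonizable multifractional stable process (rhmsp) is $X(t)=\int_{\mathbb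 R}\frac{e^{itx}-1}{|x|^{1/\alpha+H(t)}}M(dx)$, $t\ge0$. *)

theory Defs
  imports "HOL-Analysis.Analysis"
begin

definition rhmsp_kernel :: "real \<Rightarrow> (real \<Rightarrow> real) \<Rightarrow> real \<Rightarrow> real \<Rightarrow> complex" where
  "rhmsp_kernel \<alpha> H t x =
     (exp (\<i> * complex_of_real (t * x)) - 1) / complex_of_real (\<bar>x\<bar> powr (1 / \<alpha> + H t))"

text \<open>Scale parameter of the real S-alpha-S variable X(t) - X(s) = \<integral> (f_t - f_s) dM,
  i.e. the L^alpha(Lebesgue) norm of f_t - f_s (the isometry stated in the context).\<close>
definition rhmsp_incr_norm :: "real \<Rightarrow> (real \<Rightarrow> real) \<Rightarrow> real \<Rightarrow> real \<Rightarrow> real" where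
  "rhmsp_incr_norm \<alpha> H t s =
     (integral\<^sup>L lborel (\<lambda>x. cmod (rhmsp_kernel \<alpha> H t x - rhmsp_kernel \<alpha> H s x) powr \<alpha>)) powr (1 / \<alpha>)"

definition H_min :: "(real \<Rightarrow> real) \<Rightarrow> real \<Rightarrow> real \<Rightarrow> real" where
  "H_min H t s = (INF u\<in>{min s t..max s t}. H u)"

definition H_max :: "(real \<Rightarrow> real) \<Rightarrow> real \<Rightarrow> real \<Rightarrow> real" where
  "H_max H t s = (SUP u\<in>{min s t..max s t}. H u)"

end

theory Submission imports Defs "HOL-Probability.Characteristic_Functions" begin

lemma E_le_abs: "cmod (exp (\<i> * complex_of_real y) - 1) \<le> \<bar>y\<bar>"
  using iexp_approx1[of y 0] by simp

lemma E_le_2: "cmod (exp (\<i> * complex_of_real y) - 1) \<le> 2"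
proof -
  have "cmod (exp (\<i> * complex_of_real y) - 1) \<le> cmod (exp (\<i> * complex_of_real y)) + cmod 1"
    by (rule norm_triangle_ineq4)
  also have "\<dots> = 2" by simp
  finally show ?thesis .
qed

lemma E_ge_1: assumes "cos y \<le> 0" shows "1 \<le> cmod (exp (\<i> * complex_of_real y) - 1)"
proof -
  have "\<bar>Re (exp (\<i> * complex_of_real y) - 1)\<bar> \<le> cmod (exp (\<i> * complex_of_real y) - 1)"
    by (rule abs_Re_le_cmod)
  moreover have "Re (exp (\<i> * complex_of_real y) - 1) = cos y - 1"
    by (simp add: Re_exp)
  ultimately show ?thesis using assms by simp
qed

lemma abs_exp_m1: "\<bar>exp v - 1\<bar> \<le> \<bar>v\<bar> * exp \<bar>v\<bar>" for v :: real
proof (cases "v \<ge> 0")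
  case True
  have "1 - v \<le> exp (-v)" using exp_ge_add_one_self[of "-v"] by simp
  then have "exp v * (1 - v) \<le> exp v * exp (-v)" by (intro mult_left_mono) auto
  then have "exp v * (1 - v) \<le> 1" by (simp add: exp_minus)
  moreover have "exp v \<ge> 1" using True by simp
  ultimately show ?thesis using True by (simp add: algebra_simps)
next
  case False
  have "1 + v \<le> exp v" by (rule exp_ge_add_one_self)
  moreover have "exp v \<le> 1" using False by simp
  moreover have "exp \<bar>v\<bar> \<ge> 1" by simp
  moreover have "\<bar>exp v - 1\<bar> = 1 - exp v" using \<open>exp v \<le> 1\<close> by simp
  ultimately have "\<bar>exp v - 1\<bar> \<le> \<bar>v\<bar>" using False by linarith
  also have "\<dots> \<le> \<bar>v\<bar> * exp \<bar>v\<bar>" using \<open>exp \<bar>v\<bar> \<ge> 1\<close> by (simp add: mult_le_cancel_left1)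
  finally show ?thesis .
qed

lemma abs_le_exp_sum: "\<bar>z\<bar> \<le> exp z + exp (-z)" for z :: real
proof -
  have "z \<le> exp z" using exp_ge_add_one_self[of z] by linarith
  moreover have "-z \<le> exp (-z)" using exp_ge_add_one_self[of "-z"] by linarith
  ultimately show ?thesis by (simp add: abs_if add_increasing add_increasing2)
qed

lemma exp_diff_bound:
  fixes a b e L :: real
  assumes e: "e > 0" and d: "\<bar>a - b\<bar> \<le> e"
  shows "\<bar>exp (-a*L) - exp (-b*L)\<bar> \<le> (2 * \<bar>a - b\<bar> / e) * (exp ((-b+2*e)*L) + exp ((-b-2*e)*L))"
proof -
  define S where "S = exp (e*L) + exp (-(e*L))"
  have S0: "S \<ge> 0" by (simp add: S_def add_nonneg_nonneg)
  have "exp (-a*L) - exp (-b*L) = exp (-b*L) * (exp (-(a-b)*L) - 1)"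
    by (simp add: algebra_simps flip: exp_add)
  then have "\<bar>exp (-a*L) - exp (-b*L)\<bar> = exp (-b*L) * \<bar>exp (-(a-b)*L) - 1\<bar>"
    by (simp add: abs_mult)
  also have "\<dots> \<le> exp (-b*L) * (\<bar>-(a-b)*L\<bar> * exp \<bar>-(a-b)*L\<bar>)"
    by (intro mult_left_mono abs_exp_m1) auto
  also have "\<bar>-(a-b)*L\<bar> = \<bar>a-b\<bar> * \<bar>L\<bar>" by (simp add: abs_mult abs_minus_commute)
  finally have 0: "\<bar>exp (-a*L) - exp (-b*L)\<bar> \<le> exp (-b*L) * (\<bar>a-b\<bar> * \<bar>L\<bar> * exp \<bar>-(a-b)*L\<bar>)"
    by (simp add: abs_mult abs_minus_commute)
  have hL: "\<bar>L\<bar> \<le> S / e"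
  proof -
    have "\<bar>e*L\<bar> \<le> S" unfolding S_def by (rule abs_le_exp_sum)
    then show ?thesis using e by (simp add: abs_mult field_simps)
  qed
  have hE: "exp \<bar>-(a-b)*L\<bar> \<le> S"
  proof -
    have "\<bar>-(a-b)*L\<bar> \<le> e * \<bar>L\<bar>" using d by (simp add: abs_mult mult_right_mono abs_minus_commute)
    then have "exp \<bar>-(a-b)*L\<bar> \<le> exp \<bar>e*L\<bar>" using e by (simp add: abs_mult)
    also have "\<dots> \<le> S" unfolding S_def by (cases "e*L \<ge> 0") (auto simp: add_increasing2 add_increasing)
    finally show ?thesis .
  qed
  have "exp (-b*L) * (\<bar>a-b\<bar> * \<bar>L\<bar> * exp \<bar>-(a-b)*L\<bar>) \<le> exp (-b*L) * (\<bar>a-b\<bar> * (S / e) * S)"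
    using hL hE S0 e by (intro mult_left_mono mult_mono) auto
  with 0 have 1: "\<bar>exp (-a*L) - exp (-b*L)\<bar> \<le> exp (-b*L) * (\<bar>a-b\<bar> * (S / e) * S)" by linarith
  have "S * S \<le> 2 * (exp (2*e*L) + exp (-(2*e*L)))"
  proof -
    have "S * S = exp (e*L) * exp (e*L) + exp (-(e*L)) * exp (-(e*L)) + 2 * (exp (e*L) * exp (-(e*L)))"
      unfolding S_def by (simp add: algebra_simps)
    also have "\<dots> = exp (2*e*L) + exp (-(2*e*L)) + 2"
      by (simp add: algebra_simps flip: exp_add)
    finally have eq: "S * S = exp (2*e*L) + exp (-(2*e*L)) + 2" .
    have "2 \<le> exp (2*e*L) + exp (-(2*e*L))"
    proof -
      have "(exp (e*L) - exp (-(e*L)))^2 \<ge> 0" by simp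
      then show ?thesis by (simp add: power2_eq_square algebra_simps flip: exp_add)
    qed
    with eq show ?thesis by (simp add: algebra_simps)
  qed
  then have "\<bar>a-b\<bar> / e * (S * S) \<le> \<bar>a-b\<bar> / e * (2 * (exp (2*e*L) + exp (-(2*e*L))))"
    by (rule mult_left_mono) (use e in auto)
  then have "exp (-b*L) * (\<bar>a-b\<bar> / e * (S * S)) \<le> exp (-b*L) * (\<bar>a-b\<bar> / e * (2 * (exp (2*e*L) + exp (-(2*e*L)))))"
    by (rule mult_left_mono) simp
  moreover have "\<bar>a-b\<bar> * (S / e) * S = \<bar>a-b\<bar> / e * (S * S)" by simp
  ultimately have "exp (-b*L) * (\<bar>a-b\<bar> * (S / e) * S) \<le> exp (-b*L) * (\<bar>a-b\<bar> / e * (2 * (exp (2*e*L) + exp (-(2*e*L)))))"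
    by simp
  also have "\<dots> = (2 * \<bar>a - b\<bar> / e) * (exp ((-b+2*e)*L) + exp ((-b-2*e)*L))"
    by (simp add: algebra_simps flip: exp_add)
  finally show ?thesis using 1 by linarith
qed

lemma int_pow01:
  assumes "p > -1"
  shows "integrable lborel (\<lambda>x::real. indicator {0..1} x * x powr p)"
proof -
  have "set_integrable lebesgue {0..1} (\<lambda>x::real. x powr p)"
    using assms by (intro nonnegative_absolutely_integrable_1 integrable_on_powr_from_0) auto
  then have "integrable lebesgue (\<lambda>x::real. indicator {0..1} x * x powr p)"
    by (simp add: set_integrable_def)
  then show ?thesis
    by (subst (asm) integrable_completion) measurable
qed

lemma int_pow1inf:
  assumes "p < -1"
  shows "integrable lborel (\<lambda>x::real. indicator {1..} x * x powr p)"
proof -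
  have "(\<lambda>x::real. x powr p) integrable_on {1..}"
    using has_integral_powr_to_inf[OF assms, of 1] by (auto simp: integrable_on_def)
  then have "set_integrable lebesgue {1..} (\<lambda>x::real. x powr p)"
    by (intro nonnegative_absolutely_integrable_1) auto
  then have "integrable lebesgue (\<lambda>x::real. indicator {1..} x * x powr p)"
    by (simp add: set_integrable_def)
  then show ?thesis
    by (subst (asm) integrable_completion) measurable
qed

definition Dfun :: "real \<Rightarrow> real \<Rightarrow> real \<Rightarrow> real" where
  "Dfun a q x = (if \<bar>x\<bar> \<le> 1 then \<bar>x\<bar> powr (a - 1 - q) else \<bar>x\<bar> powr (-1 - q))"

lemma Dfun_meas[measurable]: "Dfun a q \<in> borel_measurable borel"
  unfolding Dfun_def by measurable

lemma Dfun_nonneg: "Dfun a q x \<ge> 0" by (simp add: Dfun_def)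

lemma Dfun_integrable:
  assumes "0 < q" "q < a"
  shows "integrable lborel (Dfun a q)"
proof -
  let ?P1 = "\<lambda>x::real. indicator {0..1} x * x powr (a-1-q)"
  let ?P2 = "\<lambda>x::real. indicator {1..} x * x powr (-1-q)"
  have i1: "integrable lborel ?P1" using assms by (intro int_pow01) auto
  have i2: "integrable lborel ?P2" using assms by (intro int_pow1inf) auto
  have i1': "integrable lborel (\<lambda>x. ?P1 (0 + (-1) * x))"
    by (rule lborel_integrable_real_affine[OF i1]) auto
  have i2': "integrable lborel (\<lambda>x. ?P2 (0 + (-1) * x))"
    by (rule lborel_integrable_real_affine[OF i2]) auto
  have "integrable lborel (\<lambda>x. ?P1 x + ?P1 (0 + (-1) * x) + ?P2 x + ?P2 (0 + (-1) * x))"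
    using i1 i1' i2 i2' by auto
  then show ?thesis
  proof (rule Bochner_Integration.integrable_bound)
    show "Dfun a q \<in> borel_measurable lborel" by measurable
    show "AE x in lborel. norm (Dfun a q x) \<le> norm (?P1 x + ?P1 (0 + (-1) * x) + ?P2 x + ?P2 (0 + (-1) * x))"
      by (intro AE_I2) (auto simp: Dfun_def indicator_def)
  qed
qed


lemma powr_diff_bound:
  fixes y a b e :: real
  assumes y: "y > 0" and e: "e > 0" and d: "\<bar>a - b\<bar> \<le> e"
  shows "\<bar>y powr (-a) - y powr (-b)\<bar> \<le> (2 * \<bar>a - b\<bar> / e) * (y powr (-b+2*e) + y powr (-b-2*e))"
  using exp_diff_bound[OF e d, of "ln y"] y by (simp add: powr_def)

lemma sum_powr_le:
  fixes u v p :: real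
  assumes "u \<ge> 0" "v \<ge> 0" "p > 0"
  shows "(u + v) powr p \<le> 2 powr p * (u powr p + v powr p)"
proof -
  have "(u + v) powr p \<le> (2 * max u v) powr p"
    using assms by (intro powr_mono2) auto
  also have "\<dots> = 2 powr p * max u v powr p" using assms by (simp add: powr_mult)
  also have "max u v powr p \<le> u powr p + v powr p"
    using assms by (auto simp: max_def)
  then have "2 powr p * max u v powr p \<le> 2 powr p * (u powr p + v powr p)"
    by (intro mult_left_mono) auto
  finally show ?thesis .
qed

lemma Dfun_mono:
  assumes "q1 \<le> q" "q \<le> q2"
  shows "Dfun a q x \<le> Dfun a q1 x + Dfun a q2 x"
proof (cases "\<bar>x\<bar> \<le> 1")
  case True
  then have "\<bar>x\<bar> powr (a - 1 - q) \<le> \<bar>x\<bar> powr (a - 1 - q2)"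
    using assms by (intro powr_mono') auto
  then have "\<bar>x\<bar> powr (a - 1 - q) \<le> \<bar>x\<bar> powr (a - 1 - q1) + \<bar>x\<bar> powr (a - 1 - q2)"
    by (metis add_increasing powr_ge_zero)
  then show ?thesis using True by (simp add: Dfun_def)
next
  case False
  then have "\<bar>x\<bar> powr (- 1 - q) \<le> \<bar>x\<bar> powr (- 1 - q1)"
    using assms by (intro powr_mono) auto
  then have "\<bar>x\<bar> powr (- 1 - q) \<le> \<bar>x\<bar> powr (- 1 - q1) + \<bar>x\<bar> powr (- 1 - q2)"
    by (metis add_increasing2 powr_ge_zero)
  then show ?thesis using False by (simp add: Dfun_def)
qed

lemma E_Dfun:
  fixes E L x a q :: real
  assumes E0: "0 \<le> E" and E2: "E \<le> 2" and EL: "E \<le> L * \<bar>x\<bar>" and L0: "0 \<le> L" and a: "a > 0"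
  shows "E powr a * \<bar>x\<bar> powr (-1-q) \<le> (L powr a + 2 powr a) * Dfun a q x"
proof (cases "x = 0")
  case True then show ?thesis by (simp add: Dfun_nonneg)
next
  case x: False
  show ?thesis
  proof (cases "\<bar>x\<bar> \<le> 1")
    case True
    have "E powr a \<le> (L * \<bar>x\<bar>) powr a" using E0 EL a by (intro powr_mono2) auto
    also have "\<dots> = L powr a * \<bar>x\<bar> powr a" using L0 by (simp add: powr_mult)
    finally have "E powr a * \<bar>x\<bar> powr (-1-q) \<le> L powr a * \<bar>x\<bar> powr a * \<bar>x\<bar> powr (-1-q)"
      by (intro mult_right_mono) auto
    also have "\<dots> = L powr a * \<bar>x\<bar> powr (a - 1 - q)"
      using x by (simp add: mult.assoc flip: powr_add) (simp add: algebra_simps)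
    also have "\<dots> \<le> (L powr a + 2 powr a) * \<bar>x\<bar> powr (a - 1 - q)"
      by (intro mult_right_mono) auto
    finally show ?thesis using True by (simp add: Dfun_def)
  next
    case False
    have "E powr a \<le> 2 powr a" using E0 E2 a by (intro powr_mono2) auto
    then have "E powr a * \<bar>x\<bar> powr (-1-q) \<le> 2 powr a * \<bar>x\<bar> powr (-1-q)"
      by (intro mult_right_mono) auto
    also have "\<dots> \<le> (L powr a + 2 powr a) * \<bar>x\<bar> powr (-1-q)"
      by (intro mult_right_mono) auto
    finally show ?thesis using False by (simp add: Dfun_def)
  qed
qed


definition Efun :: "real \<Rightarrow> real" where
  "Efun y = cmod (exp (\<i> * complex_of_real y) - 1)"

lemma Efun_nonneg: "0 \<le> Efun y" by (simp add: Efun_def)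
lemma Efun_le2: "Efun y \<le> 2" unfolding Efun_def by (rule E_le_2)
lemma Efun_le_abs: "Efun y \<le> \<bar>y\<bar>" unfolding Efun_def by (rule E_le_abs)
lemma Efun_meas[measurable]: "Efun \<in> borel_measurable borel"
  unfolding Efun_def by measurable

lemma GB_bound:
  fixes \<alpha> e u v s T x qlo qhi :: real
  assumes a: "\<alpha> > 0" and e: "e > 0" and d: "\<bar>u - v\<bar> \<le> e" and s: "\<bar>s\<bar> \<le> T"
    and ql: "qlo \<le> \<alpha> * v - 2 * \<alpha> * e" and qh: "\<alpha> * v + 2 * \<alpha> * e \<le> qhi"
  shows "Efun (s * x) powr \<alpha> * \<bar>\<bar>x\<bar> powr (-(1/\<alpha> + u)) - \<bar>x\<bar> powr (-(1/\<alpha> + v))\<bar> powr \<alpha>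
         \<le> 2 * (4/e) powr \<alpha> * \<bar>u - v\<bar> powr \<alpha> * (T powr \<alpha> + 2 powr \<alpha>) * (Dfun \<alpha> qlo x + Dfun \<alpha> qhi x)"
proof (cases "x = 0")
  case True
  then show ?thesis using a by (simp add: Efun_def Dfun_nonneg add_nonneg_nonneg)
next
  case x: False
  let ?y = "\<bar>x\<bar>"
  let ?b = "1/\<alpha> + v"
  let ?M = "T powr \<alpha> + 2 powr \<alpha>"
  define F where "F = Dfun \<alpha> qlo x + Dfun \<alpha> qhi x"
  have y: "?y > 0" using x by simp
  have dd: "\<bar>(1/\<alpha> + u) - (1/\<alpha> + v)\<bar> \<le> e" using d by simp
  have 1: "\<bar>?y powr (-(1/\<alpha> + u)) - ?y powr (-?b)\<bar> \<le> (2 * \<bar>u - v\<bar> / e) * (?y powr (-?b+2*e) + ?y powr (-?b-2*e))"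
    using powr_diff_bound[OF y e dd] by simp
  have 2: "\<bar>?y powr (-(1/\<alpha> + u)) - ?y powr (-?b)\<bar> powr \<alpha> \<le> ((2 * \<bar>u - v\<bar> / e) * (?y powr (-?b+2*e) + ?y powr (-?b-2*e))) powr \<alpha>"
    using 1 a by (intro powr_mono2) (simp_all add: less_imp_le)
  also have "\<dots> = (2 * \<bar>u - v\<bar> / e) powr \<alpha> * (?y powr (-?b+2*e) + ?y powr (-?b-2*e)) powr \<alpha>"
    using e by (intro powr_mult)
  also have "\<dots> \<le> (2 * \<bar>u - v\<bar> / e) powr \<alpha> * (2 powr \<alpha> * ((?y powr (-?b+2*e)) powr \<alpha> + (?y powr (-?b-2*e)) powr \<alpha>))"
    using a by (intro mult_left_mono sum_powr_le) auto
  also have "(?y powr (-?b+2*e)) powr \<alpha> = ?y powr (-1 - (\<alpha> * v - 2*\<alpha>*e))"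
  proof -
    have "(-?b+2*e) * \<alpha> = -1 - (\<alpha> * v - 2*\<alpha>*e)" using a by (simp add: field_simps)
    then show ?thesis by (simp add: powr_powr)
  qed
  also have "(?y powr (-?b-2*e)) powr \<alpha> = ?y powr (-1 - (\<alpha> * v + 2*\<alpha>*e))"
  proof -
    have "(-?b-2*e) * \<alpha> = -1 - (\<alpha> * v + 2*\<alpha>*e)" using a by (simp add: field_simps)
    then show ?thesis by (simp add: powr_powr)
  qed
  finally have 3: "\<bar>?y powr (-(1/\<alpha> + u)) - ?y powr (-?b)\<bar> powr \<alpha> \<le>
      (2 * \<bar>u - v\<bar> / e) powr \<alpha> * 2 powr \<alpha> * (?y powr (-1 - (\<alpha> * v - 2*\<alpha>*e)) + ?y powr (-1 - (\<alpha> * v + 2*\<alpha>*e)))"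
    by (simp add: mult.assoc)
  have E0: "0 \<le> Efun (s*x)" by (rule Efun_nonneg)
  have E2: "Efun (s*x) \<le> 2" by (rule Efun_le2)
  have EL: "Efun (s*x) \<le> T * \<bar>x\<bar>"
  proof -
    have "\<bar>s*x\<bar> = \<bar>s\<bar>*\<bar>x\<bar>" by (simp add: abs_mult)
    moreover have "\<bar>s\<bar>*\<bar>x\<bar> \<le> T*\<bar>x\<bar>" using s by (intro mult_right_mono) auto
    ultimately show ?thesis using Efun_le_abs[of "s*x"] by linarith
  qed
  have T0: "0 \<le> T" using s by linarith
  have 4: "Efun (s*x) powr \<alpha> * ?y powr (-1 - q) \<le> ?M * F"
    if "qlo \<le> q" "q \<le> qhi" for q
  proof -
    have "Efun (s*x) powr \<alpha> * ?y powr (-1 - q) \<le> ?M * Dfun \<alpha> q x"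
      by (rule E_Dfun[OF E0 E2 EL T0 a])
    also have "\<dots> \<le> ?M * F" unfolding F_def
      by (intro mult_left_mono Dfun_mono that) (auto intro: add_nonneg_nonneg)
    finally show ?thesis .
  qed
  have ae: "\<alpha> * e > 0" using a e by simp
  have q1: "qlo \<le> \<alpha> * v - 2*\<alpha>*e" "\<alpha> * v - 2*\<alpha>*e \<le> qhi" using ql qh ae by linarith+
  have q2: "qlo \<le> \<alpha> * v + 2*\<alpha>*e" "\<alpha> * v + 2*\<alpha>*e \<le> qhi" using ql qh ae by linarith+
  have "Efun (s*x) powr \<alpha> * \<bar>?y powr (-(1/\<alpha> + u)) - ?y powr (-?b)\<bar> powr \<alpha> \<le>
      Efun (s*x) powr \<alpha> * ((2 * \<bar>u - v\<bar> / e) powr \<alpha> * 2 powr \<alpha> * (?y powr (-1 - (\<alpha> * v - 2*\<alpha>*e)) + ?y powr (-1 - (\<alpha> * v + 2*\<alpha>*e))))"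
    by (intro mult_left_mono 3) auto
  also have "\<dots> = (2 * \<bar>u - v\<bar> / e) powr \<alpha> * 2 powr \<alpha> * (Efun (s*x) powr \<alpha> * ?y powr (-1 - (\<alpha> * v - 2*\<alpha>*e)) + Efun (s*x) powr \<alpha> * ?y powr (-1 - (\<alpha> * v + 2*\<alpha>*e)))"
    by (simp add: algebra_simps)
  also have "\<dots> \<le> (2 * \<bar>u - v\<bar> / e) powr \<alpha> * 2 powr \<alpha> * (?M * F + ?M * F)"
    by (intro mult_left_mono add_mono 4 q1 q2) auto
  also have "(2 * \<bar>u - v\<bar> / e) powr \<alpha> = (4/e) powr \<alpha> * \<bar>u - v\<bar> powr \<alpha> / 2 powr \<alpha>"
  proof -
    have "2 * \<bar>u - v\<bar> / e = (4/e) * \<bar>u - v\<bar> / 2" by simp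
    moreover have "(4::real) powr \<alpha> = 2 powr \<alpha> * 2 powr \<alpha>" using powr_mult[of 2 2 \<alpha>] by simp
    ultimately show ?thesis using e by (simp add: powr_mult powr_divide)
  qed
  finally show ?thesis unfolding F_def by (simp add: algebra_simps)
qed


lemma kernel_split:
  fixes \<alpha> t s x :: real and H :: "real \<Rightarrow> real"
  assumes a: "\<alpha> > 0"
  defines "G \<equiv> cmod (rhmsp_kernel \<alpha> H t x - rhmsp_kernel \<alpha> H s x) powr \<alpha>"
    and "GA \<equiv> Efun ((t - s) * x) powr \<alpha> * \<bar>x\<bar> powr (-1 - \<alpha> * H t)"
    and "GB \<equiv> Efun (s * x) powr \<alpha> * \<bar>\<bar>x\<bar> powr (-(1/\<alpha> + H t)) - \<bar>x\<bar> powr (-(1/\<alpha> + H s))\<bar> powr \<alpha>"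
  shows "G \<le> 2 powr \<alpha> * (GA + GB) \<and> GA \<le> 2 powr \<alpha> * (G + GB)"
proof (cases "x = 0")
  case True
  then show ?thesis by (simp add: G_def GA_def GB_def rhmsp_kernel_def Efun_def)
next
  case x: False
  define y where "y = \<bar>x\<bar>"
  have y: "y > 0" using x by (simp add: y_def)
  define P where "P = y powr (-(1/\<alpha> + H t))"
  define Q where "Q = y powr (-(1/\<alpha> + H s))"
  define et where "et = exp (\<i> * complex_of_real (t * x))"
  define es where "es = exp (\<i> * complex_of_real (s * x))"
  define A where "A = (et - es) * complex_of_real P"
  define B where "B = (es - 1) * complex_of_real (P - Q)"
  have kt: "rhmsp_kernel \<alpha> H t x = (et - 1) * complex_of_real P"
  proof -
    have "rhmsp_kernel \<alpha> H t x = (et - 1) * inverse (complex_of_real (y powr (1/\<alpha> + H t)))"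
      by (simp add: rhmsp_kernel_def et_def y_def divide_inverse)
    also have "inverse (complex_of_real (y powr (1/\<alpha> + H t))) = complex_of_real P"
      unfolding P_def powr_minus by (simp flip: of_real_inverse)
    finally show ?thesis .
  qed
  have ks: "rhmsp_kernel \<alpha> H s x = (es - 1) * complex_of_real Q"
  proof -
    have "rhmsp_kernel \<alpha> H s x = (es - 1) * inverse (complex_of_real (y powr (1/\<alpha> + H s)))"
      by (simp add: rhmsp_kernel_def es_def y_def divide_inverse)
    also have "inverse (complex_of_real (y powr (1/\<alpha> + H s))) = complex_of_real Q"
      unfolding Q_def powr_minus by (simp flip: of_real_inverse)
    finally show ?thesis .
  qed
  have sum: "rhmsp_kernel \<alpha> H t x - rhmsp_kernel \<alpha> H s x = A + B"
    unfolding kt ks A_def B_def by (simp add: algebra_simps)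
  have ets: "et - es = es * (exp (\<i> * complex_of_real ((t - s) * x)) - 1)"
    unfolding et_def es_def by (simp add: algebra_simps flip: exp_add)
  have nes: "cmod es = 1" unfolding es_def by simp
  have nA: "cmod A = Efun ((t - s) * x) * P"
    unfolding A_def ets Efun_def by (simp add: norm_mult nes P_def)
  have nB: "cmod B = Efun (s * x) * \<bar>P - Q\<bar>"
    unfolding B_def Efun_def es_def by (simp add: norm_mult flip: of_real_diff)
  have P0: "P \<ge> 0" by (simp add: P_def)
  have GA': "GA = cmod A powr \<alpha>"
  proof -
    have "cmod A powr \<alpha> = Efun ((t - s) * x) powr \<alpha> * P powr \<alpha>"
      unfolding nA by (simp add: powr_mult Efun_nonneg P0)
    also have "P powr \<alpha> = y powr (-1 - \<alpha> * H t)"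
    proof -
      have "(-(1/\<alpha> + H t)) * \<alpha> = -1 - \<alpha> * H t" using a by (simp add: field_simps)
      then show ?thesis unfolding P_def by (simp add: powr_powr)
    qed
    finally show ?thesis by (simp add: GA_def y_def)
  qed
  have GB': "GB = cmod B powr \<alpha>"
    unfolding nB GB_def P_def Q_def y_def by (simp add: powr_mult Efun_nonneg)
  have G': "G = cmod (A + B) powr \<alpha>" unfolding G_def sum ..
  have 1: "G \<le> 2 powr \<alpha> * (GA + GB)"
  proof -
    have "cmod (A + B) powr \<alpha> \<le> (cmod A + cmod B) powr \<alpha>"
      using a by (intro powr_mono2 norm_triangle_ineq) auto
    also have "\<dots> \<le> 2 powr \<alpha> * (cmod A powr \<alpha> + cmod B powr \<alpha>)"
      using a by (intro sum_powr_le) auto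
    finally show ?thesis unfolding G' GA' GB' .
  qed
  have 2: "GA \<le> 2 powr \<alpha> * (G + GB)"
  proof -
    have "cmod A \<le> cmod (A + B) + cmod B"
      using norm_triangle_ineq4[of "A + B" B] by simp
    then have "cmod A powr \<alpha> \<le> (cmod (A + B) + cmod B) powr \<alpha>"
      using a by (intro powr_mono2) auto
    also have "\<dots> \<le> 2 powr \<alpha> * (cmod (A + B) powr \<alpha> + cmod B powr \<alpha>)"
      using a by (intro sum_powr_le) auto
    finally show ?thesis unfolding G' GA' GB' .
  qed
  from 1 2 show ?thesis ..
qed


lemma GA1_lower:
  fixes \<alpha> p :: real
  assumes a: "\<alpha> > 0" and p: "0 \<le> p" "p \<le> \<alpha>"
  shows "indicator {pi/2..pi} x * pi powr (-1 - \<alpha>) \<le> Efun x powr \<alpha> * \<bar>x\<bar> powr (-1 - p)"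
proof (cases "x \<in> {pi/2..pi}")
  case True
  then have x: "pi/2 \<le> x" "x \<le> pi" by auto
  have xp: "x > 0" using x pi_gt_zero by linarith
  have "cos x = - cos (pi - x)" by simp
  moreover have "0 \<le> cos (pi - x)" using x by (intro cos_ge_zero) auto
  ultimately have "cos x \<le> 0" by linarith
  then have E1: "1 \<le> Efun x" unfolding Efun_def by (rule E_ge_1)
  then have "1 \<le> Efun x powr \<alpha>" using a by (intro ge_one_powr_ge_zero) auto
  moreover have "pi powr (-1 - \<alpha>) \<le> pi powr (-1 - p)"
    using p pi_gt3 by (intro powr_mono) auto
  moreover have "pi powr (-1 - p) \<le> \<bar>x\<bar> powr (-1 - p)"
    using p xp x by (intro powr_mono2') auto
  ultimately have "1 * pi powr (-1 - \<alpha>) \<le> Efun x powr \<alpha> * \<bar>x\<bar> powr (-1 - p)"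
    by (intro mult_mono) auto
  then show ?thesis using True by simp
next
  case False then show ?thesis by simp
qed

lemma GA1_integral_lower:
  fixes \<alpha> p :: real
  assumes a: "\<alpha> > 0" and p: "0 \<le> p" "p \<le> \<alpha>"
    and int: "integrable lborel (\<lambda>x. Efun x powr \<alpha> * \<bar>x\<bar> powr (-1 - p))"
  shows "pi powr (-1 - \<alpha>) * (pi / 2) \<le> integral\<^sup>L lborel (\<lambda>x. Efun x powr \<alpha> * \<bar>x\<bar> powr (-1 - p))"
proof -
  have "integral\<^sup>L lborel (\<lambda>x. indicator {pi/2..pi} x * pi powr (-1 - \<alpha>)) = pi powr (-1 - \<alpha>) * (pi / 2)"
    by simp
  moreover have "integral\<^sup>L lborel (\<lambda>x. indicator {pi/2..pi} x * pi powr (-1 - \<alpha>)) \<le> integral\<^sup>L lborel (\<lambda>x. Efun x powr \<alpha> * \<bar>x\<bar> powr (-1 - p))"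
    using int GA1_lower[OF a p] by (intro integral_mono) auto
  ultimately show ?thesis by linarith
qed


lemma GA_subst:
  fixes h \<alpha> p :: real
  assumes h: "h \<noteq> 0"
  shows "integral\<^sup>L lborel (\<lambda>x. Efun (h * x) powr \<alpha> * \<bar>x\<bar> powr (-1 - p))
       = \<bar>h\<bar> powr p * integral\<^sup>L lborel (\<lambda>x. Efun x powr \<alpha> * \<bar>x\<bar> powr (-1 - p))"
proof -
  have hp: "\<bar>h\<bar> > 0" using h by simp
  have eq: "Efun (h * (0 + (1/h) * x)) powr \<alpha> * \<bar>0 + (1/h) * x\<bar> powr (-1 - p)
        = \<bar>h\<bar> powr (1 + p) * (Efun x powr \<alpha> * \<bar>x\<bar> powr (-1 - p))" for x
  proof -
    have "\<bar>0 + (1/h) * x\<bar> = \<bar>x\<bar> / \<bar>h\<bar>" by (simp add: abs_mult)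
    then have "\<bar>0 + (1/h) * x\<bar> powr (-1 - p) = \<bar>x\<bar> powr (-1 - p) / \<bar>h\<bar> powr (-1 - p)"
      by (simp add: powr_divide)
    also have "\<dots> = \<bar>x\<bar> powr (-1 - p) * \<bar>h\<bar> powr (1 + p)"
    proof -
      have "\<bar>h\<bar> powr (-1 - p) = inverse (\<bar>h\<bar> powr (1 + p))"
        using powr_minus[of "\<bar>h\<bar>" "1 + p"] by simp
      then show ?thesis by (simp add: divide_inverse)
    qed
    finally show ?thesis using h by simp
  qed
  have "integral\<^sup>L lborel (\<lambda>x. Efun (h * x) powr \<alpha> * \<bar>x\<bar> powr (-1 - p))
      = \<bar>1/h\<bar> *\<^sub>R integral\<^sup>L lborel (\<lambda>x. Efun (h * (0 + (1/h) * x)) powr \<alpha> * \<bar>0 + (1/h) * x\<bar> powr (-1 - p))"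
    using h by (intro lborel_integral_real_affine) simp
  also have "\<dots> = \<bar>1/h\<bar> * (\<bar>h\<bar> powr (1 + p) * integral\<^sup>L lborel (\<lambda>x. Efun x powr \<alpha> * \<bar>x\<bar> powr (-1 - p)))"
    unfolding eq by simp
  also have "\<dots> = (\<bar>1/h\<bar> * \<bar>h\<bar> powr (1 + p)) * integral\<^sup>L lborel (\<lambda>x. Efun x powr \<alpha> * \<bar>x\<bar> powr (-1 - p))"
    by (simp only: mult.assoc)
  also have "\<bar>1/h\<bar> * \<bar>h\<bar> powr (1 + p) = \<bar>h\<bar> powr p"
    using hp by (simp add: powr_add field_simps)
  finally show ?thesis .
qed


lemma integrable_dom:
  fixes f g :: "real \<Rightarrow> real"
  assumes "integrable lborel g" "f \<in> borel_measurable lborel" "\<And>x. 0 \<le> f x" "\<And>x. f x \<le> g x"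
  shows "integrable lborel f"
  using assms(1)
proof (rule Bochner_Integration.integrable_bound)
  show "AE x in lborel. norm (f x) \<le> norm (g x)"
    using assms(3,4) by (intro AE_I2) (metis abs_of_nonneg order_trans real_norm_def abs_ge_self)
qed (use assms(2) in simp)

lemma incr_integral_bounds:
  fixes \<alpha> T e qlo qhi t s :: real and H :: "real \<Rightarrow> real"
  assumes a: "\<alpha> > 1" and e: "e > 0" and qlo: "0 < qlo" and qhi: "qhi < \<alpha>"
    and t: "0 \<le> t" "t \<le> T" and s: "0 \<le> s" "s \<le> T" and ts: "t \<noteq> s"
    and d: "\<bar>H t - H s\<bar> \<le> e" and ql: "qlo \<le> \<alpha> * H s - 2 * \<alpha> * e" and qh: "\<alpha> * H s + 2 * \<alpha> * e \<le> qhi"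
    and ut: "qlo \<le> \<alpha> * H t" "\<alpha> * H t \<le> qhi"
  defines "G \<equiv> \<lambda>x. cmod (rhmsp_kernel \<alpha> H t x - rhmsp_kernel \<alpha> H s x) powr \<alpha>"
    and "F \<equiv> \<lambda>x. Dfun \<alpha> qlo x + Dfun \<alpha> qhi x"
    and "KB \<equiv> 2 * (4/e) powr \<alpha> * (T powr \<alpha> + 2 powr \<alpha>)"
  shows "integral\<^sup>L lborel G \<le> 2 powr \<alpha> * (\<bar>t - s\<bar> powr (\<alpha> * H t) * ((1 + 2 powr \<alpha>) * integral\<^sup>L lborel F)
            + KB * \<bar>H t - H s\<bar> powr \<alpha> * integral\<^sup>L lborel F)"
    and "2 powr (-\<alpha>) * (\<bar>t - s\<bar> powr (\<alpha> * H t) * (pi powr (-1 - \<alpha>) * (pi / 2)))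
            - KB * \<bar>H t - H s\<bar> powr \<alpha> * integral\<^sup>L lborel F \<le> integral\<^sup>L lborel G"
proof -
  have a0: "\<alpha> > 0" using a by simp
  define M where "M = T powr \<alpha> + 2 powr \<alpha>"
  define GA where "GA = (\<lambda>x. Efun ((t - s) * x) powr \<alpha> * \<bar>x\<bar> powr (-1 - \<alpha> * H t))"
  define GB where "GB = (\<lambda>x. Efun (s * x) powr \<alpha> * \<bar>\<bar>x\<bar> powr (-(1/\<alpha> + H t)) - \<bar>x\<bar> powr (-(1/\<alpha> + H s))\<bar> powr \<alpha>)"
  define GA1 where "GA1 = (\<lambda>x. Efun x powr \<alpha> * \<bar>x\<bar> powr (-1 - \<alpha> * H t))"
  have qhi0: "0 < qhi" using qlo ut by linarith
  have Fint: "integrable lborel F"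
    unfolding F_def using qlo qhi qhi0 ut by (intro Bochner_Integration.integrable_add Dfun_integrable) auto
  have F0: "0 \<le> F x" for x unfolding F_def by (simp add: Dfun_nonneg add_nonneg_nonneg)
  have Fm[measurable]: "F \<in> borel_measurable lborel" unfolding F_def by measurable
  have Gm[measurable]: "G \<in> borel_measurable lborel" unfolding G_def rhmsp_kernel_def by measurable
  have GAm[measurable]: "GA \<in> borel_measurable lborel" unfolding GA_def by measurable
  have GBm[measurable]: "GB \<in> borel_measurable lborel" unfolding GB_def by measurable
  have GA1m[measurable]: "GA1 \<in> borel_measurable lborel" unfolding GA1_def by measurable
  have G0: "0 \<le> G x" for x unfolding G_def by simp
  have GA0: "0 \<le> GA x" for x unfolding GA_def by simp
  have GB0: "0 \<le> GB x" for x unfolding GB_def by simp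
  have GA10: "0 \<le> GA1 x" for x unfolding GA1_def by simp
  have T0: "0 \<le> T" using t by linarith
  have Dle: "Dfun \<alpha> (\<alpha> * H t) x \<le> F x" for x
    unfolding F_def by (intro Dfun_mono ut)
  have GA_le: "GA x \<le> M * F x" for x
  proof -
    have "\<bar>t - s\<bar> \<le> T" using t s by linarith
    then have "\<bar>(t - s) * x\<bar> \<le> T * \<bar>x\<bar>" by (simp add: abs_mult mult_right_mono)
    then have EL: "Efun ((t - s) * x) \<le> T * \<bar>x\<bar>" using Efun_le_abs[of "(t - s) * x"] by linarith
    have "GA x \<le> M * Dfun \<alpha> (\<alpha> * H t) x"
      unfolding GA_def M_def by (rule E_Dfun[OF Efun_nonneg Efun_le2 EL T0 a0])
    also have "\<dots> \<le> M * F x" unfolding M_def by (intro mult_left_mono Dle) auto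
    finally show ?thesis .
  qed
  have GA1_le: "GA1 x \<le> (1 + 2 powr \<alpha>) * F x" for x
  proof -
    have EL: "Efun x \<le> 1 * \<bar>x\<bar>" using Efun_le_abs[of x] by simp
    have "GA1 x \<le> (1 powr \<alpha> + 2 powr \<alpha>) * Dfun \<alpha> (\<alpha> * H t) x"
      unfolding GA1_def by (rule E_Dfun[OF Efun_nonneg Efun_le2 EL _ a0]) simp
    also have "\<dots> \<le> (1 + 2 powr \<alpha>) * F x" using Dle[of x] by (simp add: mult_left_mono)
    finally show ?thesis .
  qed
  have GB_le: "GB x \<le> (KB * \<bar>H t - H s\<bar> powr \<alpha>) * F x" for x
  proof -
    have "\<bar>s\<bar> \<le> T" using s by simp
    from GB_bound[OF a0 e d this ql qh, of x]
    show ?thesis unfolding GB_def KB_def F_def by (simp add: algebra_simps)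
  qed
  have intMF: "integrable lborel (\<lambda>x. c * F x)" for c using Fint by simp
  have GAint: "integrable lborel GA"
    by (rule integrable_dom[OF intMF[of M] GAm GA0 GA_le])
  have GBint: "integrable lborel GB"
    by (rule integrable_dom[OF intMF GBm GB0 GB_le])
  have GA1int: "integrable lborel GA1"
    by (rule integrable_dom[OF intMF GA1m GA10 GA1_le])
  have split: "G x \<le> 2 powr \<alpha> * (GA x + GB x) \<and> GA x \<le> 2 powr \<alpha> * (G x + GB x)" for x
    unfolding G_def GA_def GB_def by (rule kernel_split[OF a0])
  have Gint: "integrable lborel G"
  proof -
    have "integrable lborel (\<lambda>x. 2 powr \<alpha> * (GA x + GB x))" using GAint GBint by simp
    then show ?thesis
      by (rule integrable_dom[OF _ Gm G0]) (use split in blast)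
  qed
  have IGB: "integral\<^sup>L lborel GB \<le> KB * \<bar>H t - H s\<bar> powr \<alpha> * integral\<^sup>L lborel F"
  proof -
    have "integral\<^sup>L lborel GB \<le> integral\<^sup>L lborel (\<lambda>x. (KB * \<bar>H t - H s\<bar> powr \<alpha>) * F x)"
      using GBint intMF GB_le by (intro integral_mono) auto
    then show ?thesis by simp
  qed
  have IGA1: "integral\<^sup>L lborel GA1 \<le> (1 + 2 powr \<alpha>) * integral\<^sup>L lborel F"
  proof -
    have "integral\<^sup>L lborel GA1 \<le> integral\<^sup>L lborel (\<lambda>x. (1 + 2 powr \<alpha>) * F x)"
      using GA1int intMF GA1_le by (intro integral_mono) auto
    then show ?thesis by simp
  qed
  have IGA: "integral\<^sup>L lborel GA = \<bar>t - s\<bar> powr (\<alpha> * H t) * integral\<^sup>L lborel GA1"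
    unfolding GA_def GA1_def using ts by (intro GA_subst) simp
  have hpos: "0 \<le> \<bar>t - s\<bar> powr (\<alpha> * H t)" by simp
  show "integral\<^sup>L lborel G \<le> 2 powr \<alpha> * (\<bar>t - s\<bar> powr (\<alpha> * H t) * ((1 + 2 powr \<alpha>) * integral\<^sup>L lborel F)
            + KB * \<bar>H t - H s\<bar> powr \<alpha> * integral\<^sup>L lborel F)"
  proof -
    have "integral\<^sup>L lborel G \<le> integral\<^sup>L lborel (\<lambda>x. 2 powr \<alpha> * (GA x + GB x))"
      using Gint GAint GBint split by (intro integral_mono) auto
    also have "\<dots> = 2 powr \<alpha> * (integral\<^sup>L lborel GA + integral\<^sup>L lborel GB)"
      using GAint GBint by simp
    also have "\<dots> \<le> 2 powr \<alpha> * (\<bar>t - s\<bar> powr (\<alpha> * H t) * ((1 + 2 powr \<alpha>) * integral\<^sup>L lborel F)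
            + KB * \<bar>H t - H s\<bar> powr \<alpha> * integral\<^sup>L lborel F)"
      unfolding IGA using IGA1 IGB hpos by (intro mult_left_mono add_mono mult_left_mono) auto
    finally show ?thesis .
  qed
  have pu: "0 \<le> \<alpha> * H t" "\<alpha> * H t \<le> \<alpha>" using ut qlo qhi by linarith+
  have low1: "pi powr (-1 - \<alpha>) * (pi / 2) \<le> integral\<^sup>L lborel GA1"
    using GA1int unfolding GA1_def by (intro GA1_integral_lower[OF a0 pu])
  have "integral\<^sup>L lborel GA \<le> integral\<^sup>L lborel (\<lambda>x. 2 powr \<alpha> * (G x + GB x))"
    using Gint GAint GBint split by (intro integral_mono) auto
  also have "\<dots> = 2 powr \<alpha> * (integral\<^sup>L lborel G + integral\<^sup>L lborel GB)"
    using Gint GBint by simp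
  finally have "2 powr (-\<alpha>) * integral\<^sup>L lborel GA \<le> integral\<^sup>L lborel G + integral\<^sup>L lborel GB"
    by (simp add: powr_minus field_simps)
  moreover have "\<bar>t - s\<bar> powr (\<alpha> * H t) * (pi powr (-1 - \<alpha>) * (pi / 2)) \<le> integral\<^sup>L lborel GA"
    unfolding IGA using low1 hpos by (intro mult_left_mono) auto
  then have "2 powr (-\<alpha>) * (\<bar>t - s\<bar> powr (\<alpha> * H t) * (pi powr (-1 - \<alpha>) * (pi / 2))) \<le> 2 powr (-\<alpha>) * integral\<^sup>L lborel GA"
    by (intro mult_left_mono) auto
  ultimately show "2 powr (-\<alpha>) * (\<bar>t - s\<bar> powr (\<alpha> * H t) * (pi powr (-1 - \<alpha>) * (pi / 2)))
            - KB * \<bar>H t - H s\<bar> powr \<alpha> * integral\<^sup>L lborel F \<le> integral\<^sup>L lborel G"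
    using IGB by linarith
qed


lemma small_powr_upper:
  fixes h g c :: real
  assumes h: "0 < h" "h \<le> 1" and g: "g > 0" and c: "c \<ge> 0"
  shows "h powr (- (c * h powr g)) \<le> exp (c / g)"
proof -
  have "ln (h powr (-g)) \<le> h powr (-g)" using h by (intro ln_bound) auto
  then have "-g * ln h \<le> h powr (-g)" using h by (simp add: ln_powr)
  then have "h powr g * (-g * ln h) \<le> h powr g * h powr (-g)"
    by (intro mult_left_mono) auto
  also have "\<dots> = 1" using h by (simp add: powr_minus)
  finally have 1: "- (h powr g * ln h) \<le> 1 / g" using g by (simp add: field_simps)
  have "h powr (- (c * h powr g)) = exp (c * (- (h powr g * ln h)))"
    using h by (simp add: powr_def)
  also have "\<dots> \<le> exp (c * (1 / g))" using 1 c by (intro exp_mono mult_left_mono) auto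
  finally show ?thesis by simp
qed

lemma small_powr_lower:
  fixes h g c :: real
  assumes h: "0 < h" "h \<le> 1" and g: "g > 0" and c: "c \<ge> 0"
  shows "exp (- (c / g)) \<le> h powr (c * h powr g)"
proof -
  have "h powr (c * h powr g) = inverse (h powr (- (c * h powr g)))"
    using h by (simp add: powr_minus)
  moreover have "inverse (exp (c / g)) \<le> inverse (h powr (- (c * h powr g)))"
    using small_powr_upper[OF h g c] h by (intro le_imp_inverse_le) auto
  ultimately show ?thesis by (simp add: exp_minus)
qed


theorem mainTheorem3:
  fixes \<alpha> T C \<gamma> :: real and H :: "real \<Rightarrow> real"
  assumes "1 < \<alpha>" and "\<alpha> < 2"
    and "bdd_below (H ` {0..})" and "bdd_above (H ` {0..})"
    and "0 < (INF t\<in>{0..}. H t)" and "(SUP t\<in>{0..}. H t) < 1"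
    and "C > 0" and "\<gamma> > (SUP t\<in>{0..}. H t)"
    and "\<forall>t\<ge>0. \<forall>s\<ge>0. \<bar>H t - H s\<bar> \<le> C * \<bar>t - s\<bar> powr \<gamma>"
    and "T > 0"
  shows "\<exists>\<delta>>0. \<exists>C1>0. \<exists>C2>0. \<forall>t\<in>{0..T}. \<forall>s\<in>{0..T}. \<bar>t - s\<bar> < \<delta> \<longrightarrow>
           C1 * \<bar>t - s\<bar> powr (H_min H t s) \<le> rhmsp_incr_norm \<alpha> H t s \<and>
           rhmsp_incr_norm \<alpha> H t s \<le> C2 * \<bar>t - s\<bar> powr (H_max H t s)"
proof -
  note a = assms(1) and bb = assms(3) and ba = assms(4) and Cpos = assms(7) and T = assms(10)
  note Hol = assms(9)
  define Hl where "Hl = (INF t\<in>{0..}. H t)"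
  define Hu where "Hu = (SUP t\<in>{0..}. H t)"
  have Hl0: "0 < Hl" and Hu1: "Hu < 1" and gHu: "Hu < \<gamma>" using assms(5,6,8) by (simp_all add: Hl_def Hu_def)
  have Hbnd: "Hl \<le> H t \<and> H t \<le> Hu" if "t \<ge> 0" for t
    unfolding Hl_def Hu_def using that bb ba by (auto intro: cINF_lower cSUP_upper)
  have HlHu: "Hl \<le> Hu" using Hbnd[of 0] by simp
  have g0: "\<gamma> > 0" using Hl0 HlHu gHu by linarith
  have a0: "\<alpha> > 0" using a by simp
  define e where "e = min Hl (1 - Hu) / 4"
  have e0: "e > 0" using Hl0 Hu1 by (simp add: e_def)
  have e1: "4 * e \<le> Hl" "4 * e \<le> 1 - Hu" by (simp_all add: e_def)
  define qlo where "qlo = \<alpha> * (Hl - 2 * e)"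
  define qhi where "qhi = \<alpha> * (Hu + 2 * e)"
  have qlo0: "0 < qlo" unfolding qlo_def using a0 e1 e0 by (intro mult_pos_pos) auto
  have qhia: "qhi < \<alpha>"
  proof -
    have "Hu + 2 * e < 1" using e1 e0 by linarith
    then show ?thesis unfolding qhi_def using a0 by simp
  qed
  define F where "F = (\<lambda>x. Dfun \<alpha> qlo x + Dfun \<alpha> qhi x)"
  define IF where "IF = integral\<^sup>L lborel F"
  have IF0: "0 \<le> IF" unfolding IF_def F_def by (intro integral_nonneg_AE AE_I2) (simp add: Dfun_nonneg add_nonneg_nonneg)
  define KB where "KB = 2 * (4/e) powr \<alpha> * (T powr \<alpha> + 2 powr \<alpha>)"
  have KB0: "0 \<le> KB" unfolding KB_def by simp
  define c0 where "c0 = pi powr (-1 - \<alpha>) * (pi / 2)"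
  have c00: "c0 > 0" unfolding c0_def by simp
  define tau where "tau = 2 powr (-\<alpha>) * c0 / 2"
  have tau0: "tau > 0" unfolding tau_def using c00 by simp
  define B where "B = KB * C powr \<alpha> * IF"
  have B0: "0 \<le> B" unfolding B_def using KB0 IF0 by simp
  define \<delta>1 where "\<delta>1 = (e / C) powr (1 / \<gamma>)"
  define \<delta>2 where "\<delta>2 = (tau / (B + 1)) powr (1 / (\<alpha> * (\<gamma> - Hu)))"
  define \<delta> where "\<delta> = min 1 (min \<delta>1 \<delta>2)"
  have \<delta>0: "\<delta> > 0" unfolding \<delta>_def \<delta>1_def \<delta>2_def using e0 Cpos tau0 B0 by simp
  define K0 where "K0 = exp (\<alpha> * C / \<gamma>)"
  define K where "K = 2 powr \<alpha> * ((1 + 2 powr \<alpha>) * IF * K0 + KB * C powr \<alpha> * IF)"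
  have K0': "0 \<le> K" unfolding K_def K0_def using IF0 KB0 by simp
  define c1 where "c1 = tau * exp (- (\<alpha> * C / \<gamma>))"
  have c10: "c1 > 0" unfolding c1_def using tau0 by simp
  have C1pos: "c1 powr (1/\<alpha>) > 0" using c10 by simp
  have C2pos: "K powr (1/\<alpha>) + 1 > 0" by (simp add: add_nonneg_pos)
  have main: "\<forall>t\<in>{0..T}. \<forall>s\<in>{0..T}. \<bar>t - s\<bar> < \<delta> \<longrightarrow>
           c1 powr (1/\<alpha>) * \<bar>t - s\<bar> powr (H_min H t s) \<le> rhmsp_incr_norm \<alpha> H t s \<and>
           rhmsp_incr_norm \<alpha> H t s \<le> (K powr (1/\<alpha>) + 1) * \<bar>t - s\<bar> powr (H_max H t s)"
  proof (intro ballI impI)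
    fix t s assume ts: "t \<in> {0..T}" "s \<in> {0..T}" and hd: "\<bar>t - s\<bar> < \<delta>"
    define G where "G = (\<lambda>x. cmod (rhmsp_kernel \<alpha> H t x - rhmsp_kernel \<alpha> H s x) powr \<alpha>)"
    have N: "rhmsp_incr_norm \<alpha> H t s = integral\<^sup>L lborel G powr (1/\<alpha>)"
      unfolding rhmsp_incr_norm_def G_def ..
    show "c1 powr (1/\<alpha>) * \<bar>t - s\<bar> powr (H_min H t s) \<le> rhmsp_incr_norm \<alpha> H t s \<and>
          rhmsp_incr_norm \<alpha> H t s \<le> (K powr (1/\<alpha>) + 1) * \<bar>t - s\<bar> powr (H_max H t s)"
    proof (cases "t = s")
      case True
      then show ?thesis by (simp add: rhmsp_incr_norm_def)
    next
      case tns: False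
      define h where "h = \<bar>t - s\<bar>"
      have h0: "0 < h" using tns by (simp add: h_def)
      have hd1: "h < 1" "h < \<delta>1" "h < \<delta>2" using hd unfolding h_def \<delta>_def by auto
      have t0: "0 \<le> t" "t \<le> T" and s0: "0 \<le> s" "s \<le> T" using ts by auto
      have d: "\<bar>H t - H s\<bar> \<le> C * h powr \<gamma>" using Hol t0 s0 by (simp add: h_def)
      have Chg: "C * h powr \<gamma> \<le> e"
      proof -
        have "h powr \<gamma> \<le> \<delta>1 powr \<gamma>" using h0 hd1 g0 by (intro powr_mono2) auto
        also have "\<delta>1 powr \<gamma> = e / C" unfolding \<delta>1_def using e0 Cpos g0 by (simp add: powr_powr)
        finally show ?thesis using Cpos by (simp add: field_simps)
      qed
      have de: "\<bar>H t - H s\<bar> \<le> e" using d Chg by linarith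
      have Ht: "Hl \<le> H t" "H t \<le> Hu" and Hs: "Hl \<le> H s" "H s \<le> Hu" using Hbnd t0 s0 by auto
      have ae: "\<alpha> * e > 0" using a0 e0 by simp
      have ql: "qlo \<le> \<alpha> * H s - 2 * \<alpha> * e"
        unfolding qlo_def using Hs a0 by (simp add: algebra_simps)
      have qh: "\<alpha> * H s + 2 * \<alpha> * e \<le> qhi"
        unfolding qhi_def using Hs a0 by (simp add: algebra_simps)
      have ut: "qlo \<le> \<alpha> * H t" "\<alpha> * H t \<le> qhi"
        unfolding qlo_def qhi_def using Ht a0 e0 by (simp_all add: mult_left_mono)
      note bnds = incr_integral_bounds[OF a e0 qlo0 qhia t0 s0 tns de ql qh ut, folded G_def F_def KB_def IF_def h_def, folded c0_def]
      have dpow: "\<bar>H t - H s\<bar> powr \<alpha> \<le> C powr \<alpha> * h powr (\<alpha> * \<gamma>)"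
      proof -
        have "\<bar>H t - H s\<bar> powr \<alpha> \<le> (C * h powr \<gamma>) powr \<alpha>" using d a0 by (intro powr_mono2) auto
        also have "\<dots> = C powr \<alpha> * h powr (\<alpha> * \<gamma>)" using Cpos h0 by (simp add: powr_mult powr_powr mult.commute)
        finally show ?thesis .
      qed
      define I where "I = {min s t..max s t}"
      have Isub: "I \<subseteq> {0..}" using t0 s0 by (auto simp: I_def)
      have tI: "t \<in> I" by (auto simp: I_def)
      have Ine: "I \<noteq> {}" using tI by auto
      have baI: "bdd_above (H ` I)" using ba Isub by (meson bdd_above_mono image_mono)
      have bbI: "bdd_below (H ` I)" using bb Isub by (meson bdd_below_mono image_mono)
      have close: "\<bar>H u - H t\<bar> \<le> C * h powr \<gamma>" if "u \<in> I" for u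
      proof -
        have "\<bar>u - t\<bar> \<le> h" using that by (auto simp: I_def h_def)
        then have "\<bar>u - t\<bar> powr \<gamma> \<le> h powr \<gamma>" using g0 by (intro powr_mono2) auto
        moreover have "\<bar>H u - H t\<bar> \<le> C * \<bar>u - t\<bar> powr \<gamma>" using Hol Isub that t0 by auto
        ultimately show ?thesis using Cpos by (meson mult_left_mono less_imp_le order_trans)
      qed
      have Hmax1: "H t \<le> H_max H t s" unfolding H_max_def by (fold I_def) (rule cSUP_upper[OF tI baI])
      have Hmax2: "H_max H t s \<le> H t + C * h powr \<gamma>" unfolding H_max_def
        by (fold I_def) (rule cSUP_least[OF Ine], use close in fastforce)
      have Hmax3: "H_max H t s \<le> Hu" unfolding H_max_def Hu_def
        by (fold I_def) (rule cSUP_subset_mono[OF Ine ba Isub], simp)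
      have Hmin1: "H_min H t s \<le> H t" unfolding H_min_def by (fold I_def) (rule cINF_lower[OF bbI tI])
      have Hmin2: "H t - C * h powr \<gamma> \<le> H_min H t s" unfolding H_min_def
        by (fold I_def) (rule cINF_greatest[OF Ine], use close in fastforce)
      have Ch0: "0 \<le> \<alpha> * C" using a0 Cpos by simp
      have up1: "h powr (\<alpha> * H t) \<le> K0 * h powr (\<alpha> * H_max H t s)"
      proof -
        have eq: "h powr (\<alpha> * H t) = h powr (\<alpha> * H_max H t s) * h powr (\<alpha> * (H t - H_max H t s))"
          by (simp add: algebra_simps flip: powr_add)
        have "h powr (\<alpha> * (H t - H_max H t s)) \<le> h powr (- (\<alpha> * C * h powr \<gamma>))"
        proof (rule powr_mono')
          show "- (\<alpha> * C * h powr \<gamma>) \<le> \<alpha> * (H t - H_max H t s)"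
            using mult_left_mono[OF Hmax2, of \<alpha>] a0 by (simp add: algebra_simps)
        qed (use h0 hd1 in auto)
        also have "\<dots> \<le> K0" unfolding K0_def using small_powr_upper[OF h0 _ g0 Ch0] hd1 by simp
        finally have "h powr (\<alpha> * H_max H t s) * h powr (\<alpha> * (H t - H_max H t s)) \<le> h powr (\<alpha> * H_max H t s) * K0"
          by (intro mult_left_mono) auto
        then show ?thesis unfolding eq by (simp add: mult.commute)
      qed
      have up2: "h powr (\<alpha> * \<gamma>) \<le> h powr (\<alpha> * H_max H t s)"
        using Hmax3 gHu a0 h0 hd1 by (intro powr_mono') auto
      have intG_up: "integral\<^sup>L lborel G \<le> K * h powr (\<alpha> * H_max H t s)"
      proof -
        have "integral\<^sup>L lborel G \<le> 2 powr \<alpha> * (h powr (\<alpha> * H t) * ((1 + 2 powr \<alpha>) * IF) + KB * \<bar>H t - H s\<bar> powr \<alpha> * IF)"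
          by (rule bnds(1))
        also have "\<dots> \<le> 2 powr \<alpha> * ((K0 * h powr (\<alpha> * H_max H t s)) * ((1 + 2 powr \<alpha>) * IF) + KB * (C powr \<alpha> * h powr (\<alpha> * H_max H t s)) * IF)"
        proof -
          have "KB * \<bar>H t - H s\<bar> powr \<alpha> \<le> KB * (C powr \<alpha> * h powr (\<alpha> * \<gamma>))"
            using dpow KB0 by (rule mult_left_mono)
          also have "\<dots> \<le> KB * (C powr \<alpha> * h powr (\<alpha> * H_max H t s))"
            using up2 KB0 by (intro mult_left_mono) auto
          finally have "KB * \<bar>H t - H s\<bar> powr \<alpha> * IF \<le> KB * (C powr \<alpha> * h powr (\<alpha> * H_max H t s)) * IF"
            using IF0 by (rule mult_right_mono)
          moreover have "h powr (\<alpha> * H t) * ((1 + 2 powr \<alpha>) * IF) \<le> (K0 * h powr (\<alpha> * H_max H t s)) * ((1 + 2 powr \<alpha>) * IF)"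
            using up1 IF0 by (intro mult_right_mono) auto
          ultimately show ?thesis by (intro mult_left_mono add_mono) auto
        qed
        also have "\<dots> = K * h powr (\<alpha> * H_max H t s)" unfolding K_def by (simp add: algebra_simps)
        finally show ?thesis .
      qed
      have G0: "0 \<le> integral\<^sup>L lborel G" unfolding G_def by (intro integral_nonneg_AE AE_I2) simp
      have upper: "rhmsp_incr_norm \<alpha> H t s \<le> (K powr (1/\<alpha>) + 1) * h powr (H_max H t s)"
      proof -
        have "integral\<^sup>L lborel G powr (1/\<alpha>) \<le> (K * h powr (\<alpha> * H_max H t s)) powr (1/\<alpha>)"
          using intG_up G0 a0 by (intro powr_mono2) auto
        also have "\<dots> = K powr (1/\<alpha>) * h powr (H_max H t s)"
          using K0' h0 a0 by (simp add: powr_mult powr_powr)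
        also have "\<dots> \<le> (K powr (1/\<alpha>) + 1) * h powr (H_max H t s)"
          by (intro mult_right_mono) auto
        finally show ?thesis unfolding N .
      qed
      have lo1: "h powr (\<alpha> * \<gamma>) \<le> h powr (\<alpha> * H t) * (tau / (B + 1))"
      proof -
        have "h powr (\<alpha> * \<gamma>) = h powr (\<alpha> * H t) * h powr (\<alpha> * (\<gamma> - H t))"
          by (simp add: algebra_simps flip: powr_add)
        also have "h powr (\<alpha> * (\<gamma> - H t)) \<le> h powr (\<alpha> * (\<gamma> - Hu))"
          using Ht a0 h0 hd1 by (intro powr_mono') auto
        also have "\<dots> \<le> \<delta>2 powr (\<alpha> * (\<gamma> - Hu))"
          using h0 hd1 a0 gHu by (intro powr_mono2) auto
        also have "\<dots> = tau / (B + 1)"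
          unfolding \<delta>2_def using tau0 B0 a0 gHu by (simp add: powr_powr)
        finally show ?thesis by (simp add: mult_left_mono)
      qed
      have lo2: "KB * \<bar>H t - H s\<bar> powr \<alpha> * IF \<le> tau * h powr (\<alpha> * H t)"
      proof -
        have "KB * \<bar>H t - H s\<bar> powr \<alpha> * IF \<le> KB * (C powr \<alpha> * h powr (\<alpha> * \<gamma>)) * IF"
          using dpow KB0 IF0 by (intro mult_right_mono mult_left_mono) auto
        also have "\<dots> = B * h powr (\<alpha> * \<gamma>)" unfolding B_def by (simp add: algebra_simps)
        also have "\<dots> \<le> B * (h powr (\<alpha> * H t) * (tau / (B + 1)))"
          using lo1 B0 by (rule mult_left_mono)
        also have "\<dots> = h powr (\<alpha> * H t) * (tau * (B / (B + 1)))" by (simp add: algebra_simps)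
        also have "\<dots> \<le> h powr (\<alpha> * H t) * tau"
          using B0 tau0 by (intro mult_left_mono) (auto simp: field_simps)
        finally show ?thesis by (simp add: mult.commute)
      qed
      have lo3: "tau * h powr (\<alpha> * H t) \<le> integral\<^sup>L lborel G"
      proof -
        have "2 powr (-\<alpha>) * (h powr (\<alpha> * H t) * c0) - KB * \<bar>H t - H s\<bar> powr \<alpha> * IF \<le> integral\<^sup>L lborel G"
          by (rule bnds(2))
        moreover have "2 powr (-\<alpha>) * (h powr (\<alpha> * H t) * c0) = 2 * tau * h powr (\<alpha> * H t)"
          unfolding tau_def by simp
        ultimately show ?thesis using lo2 by linarith
      qed
      have lo4: "exp (- (\<alpha> * C / \<gamma>)) * h powr (\<alpha> * H_min H t s) \<le> h powr (\<alpha> * H t)"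
      proof -
        have "h powr (\<alpha> * H t) = h powr (\<alpha> * H_min H t s) * h powr (\<alpha> * (H t - H_min H t s))"
          by (simp add: algebra_simps flip: powr_add)
        also have "h powr (\<alpha> * (H t - H_min H t s)) \<ge> h powr (\<alpha> * C * h powr \<gamma>)"
        proof (rule powr_mono')
          show "\<alpha> * (H t - H_min H t s) \<le> \<alpha> * C * h powr \<gamma>"
            using mult_left_mono[OF Hmin2, of \<alpha>] a0 by (simp add: algebra_simps)
        qed (use h0 hd1 in auto)
        moreover have "exp (- (\<alpha> * C / \<gamma>)) \<le> h powr (\<alpha> * C * h powr \<gamma>)"
          using small_powr_lower[OF h0 _ g0 Ch0] hd1 by simp
        ultimately have "exp (- (\<alpha> * C / \<gamma>)) \<le> h powr (\<alpha> * (H t - H_min H t s))" by linarith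
        then have "exp (- (\<alpha> * C / \<gamma>)) * h powr (\<alpha> * H_min H t s) \<le> h powr (\<alpha> * (H t - H_min H t s)) * h powr (\<alpha> * H_min H t s)"
          by (intro mult_right_mono) auto
        also have "\<dots> = h powr (\<alpha> * H t)" by (simp add: algebra_simps flip: powr_add)
        finally show ?thesis .
      qed
      have intG_lo: "c1 * h powr (\<alpha> * H_min H t s) \<le> integral\<^sup>L lborel G"
      proof -
        have "c1 * h powr (\<alpha> * H_min H t s) = tau * (exp (- (\<alpha> * C / \<gamma>)) * h powr (\<alpha> * H_min H t s))"
          unfolding c1_def by simp
        also have "\<dots> \<le> tau * h powr (\<alpha> * H t)" using lo4 tau0 by (intro mult_left_mono) auto
        also have "\<dots> \<le> integral\<^sup>L lborel G" by (rule lo3)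
        finally show ?thesis .
      qed
      have lower: "c1 powr (1/\<alpha>) * h powr (H_min H t s) \<le> rhmsp_incr_norm \<alpha> H t s"
      proof -
        have "c1 powr (1/\<alpha>) * h powr (H_min H t s) = (c1 * h powr (\<alpha> * H_min H t s)) powr (1/\<alpha>)"
          using c10 h0 a0 by (simp add: powr_mult powr_powr)
        also have "\<dots> \<le> integral\<^sup>L lborel G powr (1/\<alpha>)"
          using intG_lo c10 a0 by (intro powr_mono2) auto
        finally show ?thesis unfolding N .
      qed
      show ?thesis using upper lower by (simp add: h_def)
    qed
  qed
  show ?thesis using \<delta>0 C1pos C2pos main by blast
qed

end
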